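(* Let $Q=(q_n)_{n\ge1}$ be a basic sequence that is infinite in limit. For each integer $i\ge1$ set $$\bar\varepsilon_i=\frac{\left(\sum_{j=1}^i 2l_j\right)+i+1}{\left(\sum_{j=1}^i jl_j\right)+i+1},$$ and for each positive integer $n$ let $i(n)$ be the unique integer with $L_{i(n)}<n\le L_{i(n)+1}$. Then $\lim_{n\to\infty}\bar\varepsilon_{i(n)}=0$.
   Context: A basic sequence is a sequence $Q=(q_n)_{n\ge1}$ of integers with $q_n\ge 2$; it is infinite in limit if $q_n\to\infty$. $\mathbb{N}$ denotes the positive integers. For each positive integer $j$ let $\nu_j=\min\{N : q_m\ge 2j^2 \text{ for all } m\ge N\}$. Define $l_1=\max(\nu_2-1,1)$ and, recursively for $i\ge 2$, $l_i=\max\big(\min\{k\in\mathbb{N} : l_1+2l_2+\cdots+(i-1)l_{i-1}+ik\ge \nu_{i+1}-1\},1\big)$. Put $L_i=\sum_{j=1}^i jl_j$, with $L_0=0$. *)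

theory Defs
  imports Complex_Main
begin

text \<open>Sequences are indexed from 1; the value at index 0 is irrelevant.\<close>

definition basic_seq :: "(nat \<Rightarrow> nat) \<Rightarrow> bool" where
  "basic_seq q \<longleftrightarrow> (\<forall>n\<ge>1. q n \<ge> 2)"

definition infinite_in_limit :: "(nat \<Rightarrow> nat) \<Rightarrow> bool" where
  "infinite_in_limit q \<longleftrightarrow> filterlim q at_top sequentially"

definition nu :: "(nat \<Rightarrow> nat) \<Rightarrow> nat \<Rightarrow> nat" where
  "nu q j = (LEAST N. N \<ge> 1 \<and> (\<forall>m\<ge>N. q m \<ge> 2 * j^2))"

text \<open>lstep q i Lprev = l_{i+1}, where Lprev = L_i = l_1 + 2 l_2 + ... + i l_i.\<close>
definition lstep :: "(nat \<Rightarrow> nat) \<Rightarrow> nat \<Rightarrow> nat \<Rightarrow> nat" where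
  "lstep q i Lprev =
     (if i = 0 then max (nu q 2 - 1) 1
      else max (LEAST k. k \<ge> 1 \<and> Lprev + Suc i * k \<ge> nu q (i + 2) - 1) 1)"

fun LL :: "(nat \<Rightarrow> nat) \<Rightarrow> nat \<Rightarrow> nat" where
  "LL q 0 = 0"
| "LL q (Suc i) = LL q i + Suc i * lstep q i (LL q i)"

definition ll :: "(nat \<Rightarrow> nat) \<Rightarrow> nat \<Rightarrow> nat" where
  "ll q i = (if i = 0 then 0 else lstep q (i - 1) (LL q (i - 1)))"

definition eps_bar :: "(nat \<Rightarrow> nat) \<Rightarrow> nat \<Rightarrow> real" where
  "eps_bar q i = ((\<Sum>j=1..i. 2 * real (ll q j)) + real i + 1) /
                 ((\<Sum>j=1..i. real j * real (ll q j)) + real i + 1)"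

definition i_of :: "(nat \<Rightarrow> nat) \<Rightarrow> nat \<Rightarrow> nat" where
  "i_of q n = (THE i. LL q i < n \<and> n \<le> LL q (Suc i))"

end

theory Submission
  imports Defs "HOL-Real_Asymp.Real_Asymp"
begin

lemma lstep_ge1: "lstep q i L \<ge> 1"
  unfolding lstep_def by auto

lemma ll_ge1: "j \<ge> 1 \<Longrightarrow> ll q j \<ge> 1"
  unfolding ll_def using lstep_ge1 by auto

lemma LL_smono: "strict_mono (LL q)"
proof (rule strict_mono_Suc_iff[THEN iffD2], intro allI)
  fix i show "LL q i < LL q (Suc i)" using lstep_ge1[of q i "LL q i"] by simp
qed

lemma i_of_prop:
  assumes "n \<ge> 1"
  shows "LL q (i_of q n) < n \<and> n \<le> LL q (Suc (i_of q n))"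
proof -
  have sm: "strict_mono (LL q)" by (rule LL_smono)
  have ex: "\<exists>k. n \<le> LL q (Suc k)"
  proof -
    have "Suc n \<le> LL q (Suc n)" using seq_suble[OF sm, of "Suc n"] .
    then show ?thesis by (intro exI[of _ n]) simp
  qed
  define i where "i = (LEAST k. n \<le> LL q (Suc k))"
  have i1: "n \<le> LL q (Suc i)" unfolding i_def using ex by (rule LeastI_ex)
  have i2: "LL q i < n"
  proof (cases i)
    case 0 then show ?thesis using assms by simp
  next
    case (Suc k)
    have "k < (LEAST k. n \<le> LL q (Suc k))" using Suc unfolding i_def[symmetric] by simp
    then have "\<not> n \<le> LL q (Suc k)" by (rule not_less_Least)
    then show ?thesis using Suc by simp
  qed
  have uniq: "j = i" if jj: "LL q j < n \<and> n \<le> LL q (Suc j)" for j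
  proof (rule ccontr)
    assume ne: "j \<noteq> i"
    show False
    proof (cases "j < i")
      case True
      then have "Suc j \<le> i" by (rule Suc_leI)
      then have "LL q (Suc j) \<le> LL q i" by (rule strict_mono_less_eq[OF sm, THEN iffD2])
      then show False using jj i2 by linarith
    next
      case False
      with ne have "i < j" by linarith
      then have "Suc i \<le> j" by (rule Suc_leI)
      then have "LL q (Suc i) \<le> LL q j" by (rule strict_mono_less_eq[OF sm, THEN iffD2])
      then show False using jj i1 by linarith
    qed
  qed
  have "i_of q n = i" unfolding i_of_def
  proof (rule the_equality)
    show "LL q i < n \<and> n \<le> LL q (Suc i)" by (rule conjI[OF i2 i1])
  next
    fix j assume "LL q j < n \<and> n \<le> LL q (Suc j)"
    then show "j = i" by (rule uniq)
  qed
  then show ?thesis using i1 i2 by simp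
qed

lemma i_of_tends: "filterlim (i_of q) at_top sequentially"
proof (rule filterlim_at_top_ge[where c=0, THEN iffD2], intro allI impI)
  fix N :: nat
  have sm: "strict_mono (LL q)" by (rule LL_smono)
  show "eventually (\<lambda>n. N \<le> i_of q n) sequentially"
  proof (rule eventually_sequentiallyI[of "Suc (LL q N)"])
    fix n assume n: "Suc (LL q N) \<le> n"
    have p: "n \<le> LL q (Suc (i_of q n))" using i_of_prop[of n q] n by simp
    show "N \<le> i_of q n"
    proof (rule ccontr)
      assume "\<not> N \<le> i_of q n"
      then have "Suc (i_of q n) \<le> N" by simp
      then have "LL q (Suc (i_of q n)) \<le> LL q N" using strict_mono_less_eq[OF sm] by blast
      then show False using p n by linarith
    qed
  qed
qed

lemma aux: fixes C x :: real assumes "C \<ge> 0" "x \<ge> 0"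
  shows "(2 * C + x + 1) / ((x + 1) * (x + 2) / 2) \<le> (4 * C + 2) / (x + 1)"
proof -
  have "2 * (2 * C + x + 1) \<le> (4 * C + 2) * (x + 2)" using assms
    by (simp add: algebra_simps)
  then show ?thesis using assms by (simp add: divide_simps)
qed
lemma ev_small: "e > 0 \<Longrightarrow> eventually (\<lambda>i. (4 * C + 2) / (real i + 1) < (e::real) / 2) sequentially"
proof -
  assume e: "e > 0"
  show ?thesis
  proof (rule eventually_sequentiallyI[of "nat \<lceil>2 * \<bar>4 * C + 2\<bar> / e\<rceil>"])
    fix i assume "nat \<lceil>2 * \<bar>4 * C + 2\<bar> / e\<rceil> \<le> i"
    then have "2 * \<bar>4 * C + 2\<bar> / e \<le> real i" by linarith
    then have "2 * \<bar>4 * C + 2\<bar> \<le> e * real i" using e by (simp add: field_simps)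
    then have "2 * (4 * C + 2) < e * (real i + 1)" using e abs_ge_self[of "4*C+2"] by (simp add: algebra_simps)
    then show "(4 * C + 2) / (real i + 1) < e / 2" by (simp add: field_simps)
  qed
qed

lemma gauss_real: "(\<Sum>j=1..i. real j) = real i * (real i + 1) / 2"
  by (induction i) (auto simp: field_simps)

lemma eps_bound:
  assumes M: "M \<ge> (1::nat)"
  shows "eps_bar q i \<le> (4 * (\<Sum>j=1..M. real (ll q j)) + 2) / (real i + 1) + 2 / real M"
proof -
  define C where "C = (\<Sum>j=1..M. real (ll q j))"
  define S1 where "S1 = (\<Sum>j=1..i. real (ll q j))"
  define S2 where "S2 = (\<Sum>j=1..i. real j * real (ll q j))"
  define g where "g j = (if j \<le> M then real (ll q j) else 0)" for j
  have C0: "C \<ge> 0" unfolding C_def by (simp add: sum_nonneg)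
  have pt: "real (ll q j) \<le> g j + real j * real (ll q j) / real M" for j
  proof (cases "j \<le> M")
    case True then show ?thesis using M by (simp add: g_def)
  next
    case False
    then have "real M \<le> real j" by simp
    then have "real M * real (ll q j) \<le> real j * real (ll q j)" by (simp add: mult_right_mono)
    then show ?thesis using False M by (simp add: g_def field_simps)
  qed
  have "S1 \<le> (\<Sum>j=1..i. g j) + S2 / real M"
    unfolding S1_def S2_def sum_divide_distrib sum.distrib[symmetric] by (rule sum_mono) (rule pt)
  moreover have "(\<Sum>j=1..i. g j) \<le> C"
  proof -
    have "(\<Sum>j=1..i. g j) \<le> (\<Sum>j=1..max i M. g j)"
      by (rule sum_mono2) (auto simp: g_def)
    also have "\<dots> = (\<Sum>j=1..M. g j)"
      by (rule sum.mono_neutral_right) (auto simp: g_def)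
    also have "\<dots> = C" unfolding C_def g_def by simp
    finally show ?thesis .
  qed
  ultimately have S1b: "S1 \<le> C + S2 / real M" by linarith
  have S2b: "real i * (real i + 1) / 2 \<le> S2"
    unfolding gauss_real[symmetric] S2_def
    by (rule sum_mono) (use ll_ge1[of _ q] in auto)
  have S20: "S2 \<ge> 0" unfolding S2_def by (simp add: sum_nonneg)
  define D where "D = S2 + real i + 1"
  have Dpos: "D > 0" unfolding D_def using S20 by simp
  have Db: "(real i + 1) * (real i + 2) / 2 \<le> D" unfolding D_def using S2b
    by (simp add: field_simps)
  have "eps_bar q i = (2 * S1 + real i + 1) / D"
    unfolding eps_bar_def S1_def S2_def D_def by (simp add: sum_distrib_left)
  also have "\<dots> \<le> (2 * C + real i + 1 + 2 * S2 / real M) / D"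
    using S1b Dpos by (intro divide_right_mono) linarith+
  also have "\<dots> = (2 * C + real i + 1) / D + 2 * (S2 / D) / real M"
    by (simp only: add_divide_distrib divide_divide_eq_left times_divide_eq_right mult.commute mult.left_commute)
  also have "(2 * C + real i + 1) / D \<le> (2 * C + real i + 1) / ((real i + 1) * (real i + 2) / 2)"
    by (rule divide_left_mono) (use Db C0 Dpos in auto)
  also have "S2 / D \<le> 1" using Dpos unfolding D_def by simp
  also have "(2 * C + real i + 1) / ((real i + 1) * (real i + 2) / 2) \<le> (4 * C + 2) / (real i + 1)"
    by (rule aux) (use C0 in auto)
  finally have "eps_bar q i \<le> (4 * C + 2) / (real i + 1) + 2 * 1 / real M"
    using M by (simp add: divide_right_mono)
  then show ?thesis unfolding C_def by simp
qed

lemma eps_nonneg: "eps_bar q i \<ge> 0"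
  unfolding eps_bar_def by (intro divide_nonneg_nonneg add_nonneg_nonneg sum_nonneg) auto

lemma eps_tends: "(\<lambda>i. eps_bar q i) \<longlonglongrightarrow> 0"
proof (rule tendstoI)
  fix e :: real assume e: "e > 0"
  define M :: nat where "M = nat \<lceil>4 / e\<rceil> + 1"
  have M1: "M \<ge> 1" unfolding M_def by simp
  have "4 / e < real M" unfolding M_def by linarith
  then have "4 < e * real M" using e by (simp add: field_simps)
  then have Me: "2 / real M < e / 2" using e M1 by (simp add: field_simps)
  define C where "C = (\<Sum>j=1..M. real (ll q j))"
  have "eventually (\<lambda>i. (4 * C + 2) / (real i + 1) < e / 2) sequentially"
    using e by (rule ev_small)
  then show "eventually (\<lambda>i. dist (eps_bar q i) 0 < e) sequentially"
  proof (rule eventually_mono)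
    fix i assume "(4 * C + 2) / (real i + 1) < e / 2"
    then show "dist (eps_bar q i) 0 < e"
      using eps_bound[OF M1, of q i] eps_nonneg[of q i] Me unfolding C_def[symmetric]
      by (simp only: dist_real_def diff_zero abs_of_nonneg[OF eps_nonneg])
  qed
qed

theorem mainTheorem16:
  fixes q :: "nat \<Rightarrow> nat"
  assumes "basic_seq q" and "infinite_in_limit q"
  shows "(\<lambda>n. eps_bar q (i_of q n)) \<longlonglongrightarrow> 0"
  by (rule filterlim_compose[OF eps_tends i_of_tends])

end
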